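(* For every partition $\mu$ of $n$, the restriction of the $\mathsf T$-equivariant Gamma class $\Gamma_{\mathrm{Sym}}$ of $\mathrm{Sym}^n(\mathbb C^2)$ to the inertia component $I_\mu$ is $$\Gamma_{\mathrm{Sym}}\big|_{\mu}=(t_1t_2)^{\ell(\mu)}(2\pi)^{n-\ell(\mu)}\Big(\prod_i\mu_i\Big)\Big(\prod_i\mu_i^{-\mu_it_1}\mu_i^{-\mu_it_2}\Big)\Big(\prod_i\Gamma(\mu_it_1)\Gamma(\mu_it_2)\Big).$$
   Context: $\mathsf T=(\mathbb C^* )^2$ acts on $\mathbb C^2$ with equivariant parameters $t_1,t_2$, hence on $\mathrm{Sym}^n(\mathbb C^2)=[(\mathbb C^2)^n/S_n]$. The inertia stack $I\mathrm{Sym}^n(\mathbb C^2)$ is a disjoint union of components $I_\mu=[(\mathbb C^{2n})_\sigma/C(\sigma)]$ indexed by partitions $\mu$ of $n$, where $\sigma\in S_n$ has cycle type $\mu=(\mu_1,\dots,\mu_{\ell(\mu)})$, $(\mathbb C^{2n})_\sigma$ is the $\sigma$-invariant subspace and $C(\sigma)$ the centralizer. Iritani's Gamma class of a $\mathsf T$-equivariant vector bundle $\mathcal V$ on a Deligne–Mumford stack $\mathcal X$: on each inertia component $\mathcal X_i$ with stabilizer element $g_i$, decompose $\mathcal V|_{\mathcal X_i}=\bigoplus_{0\le f<1}\mathcal V_{i,f}$ with $g_i$ acting on $\mathcal V_{i,f}$ by $e^{2\pi\sqrt{-1}f}$, and let $\delta_{i,f,j}$ be the $\mathsf T$-equivariant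 Chern roots of $\mathcal V_{i,f}$; then $\Gamma(\mathcal V)=\bigoplus_i\prod_f\prod_j\Gamma(1-f+\delta_{i,f,j})$. $\Gamma_{\mathrm{Sym}}=\Gamma(T\mathrm{Sym}^n(\mathbb C^2))$. *)

theory Defs
  imports "HOL-Analysis.Analysis"
begin

text \<open>A T-equivariant orbifold vector bundle restricted to an inertia component is recorded
  by the list of pairs (f, delta): f in [0,1) is the age (the stabiliser element acts by
  exp(2 pi i f) on the line) and delta is the T-equivariant Chern root of that line,
  as an element of H_T(pt) = C[t1,t2], evaluated at the equivariant parameters.\<close>

definition iritani_gamma :: "(real \<times> complex) list \<Rightarrow> complex" where
  "iritani_gamma V = (\<Prod>(f, \<delta>)\<leftarrow>V. Gamma (1 - complex_of_real f + \<delta>))"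

text \<open>Restriction of T Sym^n(C^2) = (C^2)^n to the inertia component I_mu, sigma of cycle
  type mu: a cycle of length m acts on C^m (x) C^2 with eigenvalues exp(2 pi i k/m),
  k = 0..m-1, each eigenline in C^m (x) C e_j having T-weight t_j.\<close>

definition tangent_Sym_at :: "nat list \<Rightarrow> complex \<Rightarrow> complex \<Rightarrow> (real \<times> complex) list" where
  "tangent_Sym_at \<mu> t1 t2 =
     concat (map (\<lambda>m. concat (map (\<lambda>k. [(real k / real m, t1), (real k / real m, t2)]) [0..<m])) \<mu>)"

definition Gamma_Sym_restr :: "nat list \<Rightarrow> complex \<Rightarrow> complex \<Rightarrow> complex" where
  "Gamma_Sym_restr \<mu> t1 t2 = iritani_gamma (tangent_Sym_at \<mu> t1 t2)"

end

theory Submission imports Defs "HOL-Computational_Algebra.Polynomial" begin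

lemma poch_block:
  fixes w :: complex
  assumes "m > 0"
  shows "pochhammer (of_nat m * w) m = of_nat m ^ m * (\<Prod>k<m. w + of_nat k / of_nat m)"
proof -
  have "pochhammer (of_nat m * w) m = (\<Prod>k<m. of_nat m * (w + of_nat k / of_nat m))"
    unfolding pochhammer_prod using assms by (intro prod.cong) (auto simp: field_simps)
  also have "\<dots> = of_nat m ^ m * (\<Prod>k<m. w + of_nat k / of_nat m)"
    by (simp add: prod.distrib)
  finally show ?thesis .
qed

lemma poch_mult:
  fixes z :: complex
  assumes "m > 0"
  shows "pochhammer (of_nat m * z) (m*n) = of_nat m ^ (m*n) * (\<Prod>k<m. pochhammer (z + of_nat k / of_nat m) n)"
proof (induction n)
  case 0
  then show ?case by simp
next
  case (Suc n)
  have "pochhammer (of_nat m * z) (m * Suc n) = pochhammer (of_nat m * z) (m*n) * pochhammer (of_nat m * z + of_nat (m*n)) m"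
    using pochhammer_product'[of "of_nat m * z" "m*n" m] by (simp add: algebra_simps)
  also have "of_nat m * z + of_nat (m*n) = of_nat m * (z + of_nat n)" by (simp add: algebra_simps)
  also have "pochhammer (of_nat m * (z + of_nat n)) m = of_nat m ^ m * (\<Prod>k<m. z + of_nat n + of_nat k / of_nat m)"
    by (rule poch_block[OF assms])
  also note Suc
  also have "of_nat m ^ (m * n) * (\<Prod>k<m. pochhammer (z + of_nat k / of_nat m) n) *
    (of_nat m ^ m * (\<Prod>k<m. z + of_nat n + of_nat k / of_nat m)) =
    of_nat m ^ (m * Suc n) * (\<Prod>k<m. pochhammer (z + of_nat k / of_nat m) n * (z + of_nat k / of_nat m + of_nat n))"
    by (simp add: prod.distrib[symmetric] power_add mult_ac add_ac)
  also have "\<dots> = of_nat m ^ (m * Suc n) * (\<Prod>k<m. pochhammer (z + of_nat k / of_nat m) (Suc n))"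
    by (simp add: pochhammer_rec' mult.commute)
  finally show ?case .
qed

lemma shift_valid:
  fixes z :: complex
  assumes "m > 0" "of_nat m * z \<notin> \<int>\<^sub>\<le>\<^sub>0"
  shows "z + of_nat k / of_nat m \<notin> \<int>\<^sub>\<le>\<^sub>0"
proof
  assume "z + of_nat k / of_nat m \<in> \<int>\<^sub>\<le>\<^sub>0"
  then obtain j where j: "z + of_nat k / of_nat m = - of_nat j" by (elim nonpos_Ints_cases')
  have e: "of_nat k + z * of_nat m = - (of_nat j * of_nat m)"
    using assms(1) j by (simp add: field_simps)
  have "of_nat m * z = - of_nat (m*j + k)"
  proof -
    have "of_nat m * z = - (of_nat j * of_nat m) - of_nat k" using e by (simp add: algebra_simps eq_diff_eq)
    also have "- (of_nat j * of_nat m) - of_nat k = - (of_nat (m*j+k) :: complex)" by (simp add: algebra_simps)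
    finally show ?thesis .
  qed
  with assms(2) show False using minus_of_nat_in_nonpos_Ints by metis
qed

definition gH :: "nat \<Rightarrow> nat \<Rightarrow> complex" where
  "gH m n = fact (n-1) ^ m * (\<Prod>k<m. exp (of_nat k / of_nat m * of_real (ln (real n))))
     * of_nat m ^ (m*n) / fact (m*n - 1)"

lemma gseries_eq:
  fixes z :: complex
  assumes m: "m > 0" and z: "of_nat m * z \<notin> \<int>\<^sub>\<le>\<^sub>0" and n: "n > 0"
  shows "exp (of_nat m * z * of_real (ln (real m))) * (\<Prod>k<m. Gamma_series' (z + of_nat k / of_nat m) n)
          / Gamma_series' (of_nat m * z) (m*n) = gH m n"
proof -
  define L where "L = complex_of_real (ln (real n))"
  define lm where "lm = complex_of_real (ln (real m))"
  define P where "P = (\<Prod>k<m. pochhammer (z + of_nat k / of_nat m) n)"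
  define E where "E = (\<Prod>k<m. exp (of_nat k / of_nat m * L))"
  have P0: "P \<noteq> 0" unfolding P_def
    using shift_valid[OF m z] by (auto dest: pochhammer_eq_0_imp_nonpos_Int)
  have A: "(\<Prod>k<m. Gamma_series' (z + of_nat k / of_nat m) n) = fact (n-1) ^ m * exp (of_nat m * z * L) * E / P"
  proof -
    have "(\<Prod>k<m. Gamma_series' (z + of_nat k / of_nat m) n) =
      (\<Prod>k<m. fact (n-1) * (exp (z * L) * exp (of_nat k / of_nat m * L)) / pochhammer (z + of_nat k / of_nat m) n)"
      unfolding Gamma_series'_def L_def by (intro prod.cong refl) (simp add: exp_add[symmetric] algebra_simps)
    also have "\<dots> = fact (n-1) ^ m * exp (z * L) ^ m * E / P"
      unfolding E_def P_def by (simp add: prod_dividef prod.distrib)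
    also have "exp (z * L) ^ m = exp (of_nat m * z * L)"
      by (simp add: exp_of_nat_mult[symmetric] mult_ac)
    finally show ?thesis .
  qed
  have B: "Gamma_series' (of_nat m * z) (m*n) = fact (m*n-1) * (exp (of_nat m * z * lm) * exp (of_nat m * z * L)) / (of_nat m ^ (m*n) * P)"
  proof -
    have "ln (real (m*n)) = ln (real m) + ln (real n)" using m n by (simp add: ln_mult)
    then show ?thesis
      unfolding Gamma_series'_def poch_mult[OF m] P_def L_def lm_def
      by (simp add: exp_add[symmetric] algebra_simps)
  qed
  have F: "fact (m*n-1) \<noteq> (0::complex)" by simp
  show ?thesis
    unfolding A B gH_def E_def[symmetric] L_def[symmetric] lm_def[symmetric]
    using P0 F by (simp add: field_simps)
qed


lemma gH_lim:
  fixes z :: complex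
  assumes m: "m > 0" and z: "of_nat m * z \<notin> \<int>\<^sub>\<le>\<^sub>0"
  shows "gH m \<longlonglongrightarrow> exp (of_nat m * z * of_real (ln (real m))) * (\<Prod>k<m. Gamma (z + of_nat k / of_nat m))
          / Gamma (of_nat m * z)"
proof -
  have sm: "strict_mono (\<lambda>n::nat. m * n)" using m by (auto simp: strict_mono_def)
  have "(\<lambda>n. Gamma_series' (of_nat m * z) (m*n)) \<longlonglongrightarrow> Gamma (of_nat m * z)"
    using LIMSEQ_subseq_LIMSEQ[OF Gamma_series'_LIMSEQ sm, of "of_nat m * z"] by (simp add: o_def)
  moreover have "Gamma (of_nat m * z) \<noteq> 0" using z by (simp add: Gamma_eq_zero_iff)
  ultimately have "(\<lambda>n. exp (of_nat m * z * of_real (ln (real m))) * (\<Prod>k<m. Gamma_series' (z + of_nat k / of_nat m) n)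
          / Gamma_series' (of_nat m * z) (m*n)) \<longlonglongrightarrow> exp (of_nat m * z * of_real (ln (real m))) * (\<Prod>k<m. Gamma (z + of_nat k / of_nat m))
          / Gamma (of_nat m * z)"
    by (intro tendsto_intros Gamma_series'_LIMSEQ) auto
  moreover have "eventually (\<lambda>n. exp (of_nat m * z * of_real (ln (real m))) * (\<Prod>k<m. Gamma_series' (z + of_nat k / of_nat m) n)
          / Gamma_series' (of_nat m * z) (m*n) = gH m n) sequentially"
    using eventually_gt_at_top[of 0] by eventually_elim (rule gseries_eq[OF m z])
  ultimately show ?thesis by (rule Lim_transform_eventually)
qed

lemma gauss_mult:
  assumes m: "m > 0"
  shows "\<exists>C. \<forall>z::complex. of_nat m * z \<notin> \<int>\<^sub>\<le>\<^sub>0 \<longrightarrow>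
     (\<Prod>k<m. Gamma (z + of_nat k / of_nat m)) = C * exp (- (of_nat m * z) * of_real (ln (real m))) * Gamma (of_nat m * z)"
proof (intro exI allI impI)
  fix z :: complex assume z: "of_nat m * z \<notin> \<int>\<^sub>\<le>\<^sub>0"
  have e: "exp (of_nat m * z * of_real (ln (real m))) * (\<Prod>k<m. Gamma (z + of_nat k / of_nat m))
          / Gamma (of_nat m * z) = lim (gH m)"
    using gH_lim[OF m z] by (simp add: limI)
  have g: "Gamma (of_nat m * z) \<noteq> 0" using z by (simp add: Gamma_eq_zero_iff)
  show "(\<Prod>k<m. Gamma (z + of_nat k / of_nat m)) = lim (gH m) * exp (- (of_nat m * z) * of_real (ln (real m))) * Gamma (of_nat m * z)"
    unfolding e[symmetric] using g by (simp add: field_simps exp_minus)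
qed



lemma roots_unity_prod:
  fixes d :: nat
  defines "w \<equiv> \<lambda>j::nat. exp (2 * of_real pi * \<i> * of_nat j / of_nat (Suc d))"
  shows "(\<Prod>j\<in>{1..d}. 1 - w j) = of_nat (Suc d)"
proof -
  define p where "p = (\<Prod>j\<in>{1..d}. [:- w j, 1:])"
  define q where "q = (\<Sum>i\<le>d. monom (1::complex) i)"
  have wm: "w j ^ Suc d = 1" for j unfolding w_def by (rule complex_root_unity) simp
  have w1: "w j \<noteq> 1" if "j \<in> {1..d}" for j
    unfolding w_def using that by (subst complex_root_unity_eq_1) (auto dest: dvd_imp_le)
  have inj: "inj_on w {1..d}"
    unfolding w_def inj_on_def by (subst complex_root_unity_eq) auto
  have degp: "degree p = d" unfolding p_def
    by (subst degree_prod_eq_sum_degree) auto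
  have lcp: "lead_coeff p = 1" unfolding p_def lead_coeff_prod by simp
  have degq: "degree q \<le> d" unfolding q_def
    by (intro degree_sum_le) (auto intro: order.trans[OF degree_monom_le])
  have "p = q"
  proof (rule poly_eqI_degree_lead_coeff[of p d q "w ` {1..d}"])
    show "coeff p d = coeff q d" using lcp degp unfolding q_def by (simp add: coeff_sum_monom)
    show "d \<le> card (w ` {1..d})" using inj by (simp add: card_image)
    show "degree p \<le> d" using degp by simp
    show "degree q \<le> d" by (rule degq)
    fix z assume "z \<in> w ` {1..d}"
    then obtain j where j: "j \<in> {1..d}" "z = w j" by auto
    have "poly p z = 0" unfolding p_def poly_prod using j by (auto intro: prod_zero)
    moreover have "poly q z = 0"
    proof -
      have "poly q z = (\<Sum>i<Suc d. z ^ i)" unfolding q_def poly_sum poly_monom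
        by (simp add: lessThan_Suc_atMost)
      also have "\<dots> = (z ^ Suc d - 1) / (z - 1)"
        using w1[OF j(1)] j(2) by (subst geometric_sum) auto
      also have "\<dots> = 0" using wm j(2) by simp
      finally show ?thesis .
    qed
    ultimately show "poly p z = poly q z" by simp
  qed
  then have "poly p 1 = poly q 1" by simp
  then show ?thesis unfolding p_def q_def poly_prod poly_sum poly_monom by simp
qed


lemma norm_one_minus_cis: "norm (1 - cis t) = 2 * \<bar>sin (t/2)\<bar>"
proof -
  have c: "cos t = 1 - 2 * sin (t/2)^2" using cos_double_sin[of "t/2"] by simp
  have s: "sin t = 2 * sin (t/2) * cos (t/2)" using sin_double[of "t/2"] by simp
  have "norm (1 - cis t) = sqrt ((1 - cos t)^2 + (sin t)^2)"
    by (simp add: cmod_def)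
  also have "(1 - cos t)^2 + (sin t)^2 = (2 * sin (t/2))^2 * (sin (t/2)^2 + cos (t/2)^2)"
    unfolding c s by algebra
  also have "\<dots> = (2 * sin (t/2))^2" by simp
  finally show ?thesis by (simp add: real_sqrt_mult real_sqrt_abs)
qed

lemma sin_prod:
  fixes d :: nat
  shows "2 ^ d * (\<Prod>j\<in>{1..d}. sin (pi * real j / real (Suc d))) = real (Suc d)"
proof -
  define w where "w \<equiv> \<lambda>j::nat. exp (2 * of_real pi * \<i> * of_nat j / of_nat (Suc d) :: complex)"
  have "norm (\<Prod>j\<in>{1..d}. 1 - w j) = real (Suc d)"
    using roots_unity_prod[of d] unfolding w_def by (simp only: norm_of_nat)
  also have "norm (\<Prod>j\<in>{1..d}. 1 - w j) = (\<Prod>j\<in>{1..d}. norm (1 - w j))"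
    by (simp add: prod_norm)
  also have "\<dots> = (\<Prod>j\<in>{1..d}. 2 * sin (pi * real j / real (Suc d)))"
  proof (intro prod.cong refl)
    fix j assume j: "j \<in> {1..d}"
    have "w j = cis (2 * pi * real j / real (Suc d))"
      unfolding w_def cis_conv_exp by (simp add: mult_ac)
    moreover have "2 * pi * real j / real (Suc d) / 2 = pi * real j / real (Suc d)" by (simp add: field_simps)
    ultimately have "norm (1 - w j) = 2 * \<bar>sin (pi * real j / real (Suc d))\<bar>"
      by (simp only: norm_one_minus_cis)
    also have "sin (pi * real j / real (Suc d)) > 0"
    proof (intro sin_gt_zero)
      have "pi * real j \<le> pi * real d" using j by (intro mult_left_mono) auto
      then have "pi * real j < pi * real (Suc d)" by simp
      then show "pi * real j / real (Suc d) < pi" by (simp add: field_simps)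
      show "0 < pi * real j / real (Suc d)" using j by auto
    qed
    then have "\<bar>sin (pi * real j / real (Suc d))\<bar> = sin (pi * real j / real (Suc d))" by simp
    finally show "norm (1 - w j) = 2 * sin (pi * real j / real (Suc d))" .
  qed
  also have "\<dots> = 2 ^ d * (\<Prod>j\<in>{1..d}. sin (pi * real j / real (Suc d)))"
    by (simp add: prod.distrib)
  finally show ?thesis by simp
qed


lemma Gamma_frac_prod_sq:
  fixes d :: nat
  defines "Q \<equiv> (\<Prod>j\<in>{1..d}. Gamma (of_nat j / of_nat (Suc d) :: complex))"
  shows "Q ^ 2 = of_real pi ^ d * 2 ^ d / of_nat (Suc d)"
proof -
  define m where "m = Suc d"
  have "(\<Prod>j\<in>{1..d}. Gamma (of_nat j / of_nat m :: complex)) = (\<Prod>j\<in>{1..d}. Gamma (1 - of_nat j / of_nat m))"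
  proof (rule prod.reindex_bij_witness[of _ "\<lambda>j. m - j" "\<lambda>j. m - j"])
    fix j assume j: "j \<in> {1..d}"
    show "m - (m - j) = j" "m - j \<in> {1..d}" using j by (auto simp: m_def)
    have e: "(of_nat (m - j) :: complex) = of_nat m - of_nat j" using j by (simp add: m_def of_nat_diff)
    have m0: "(of_nat m :: complex) \<noteq> 0" unfolding m_def by (rule of_nat_neq_0)
    have "1 - of_nat (m - j) / of_nat m = (of_nat j / of_nat m :: complex)"
      unfolding e using m0 by (simp add: field_simps)
    then show "Gamma (1 - of_nat (m - j) / of_nat m) = Gamma (of_nat j / of_nat m :: complex)"
      by simp
  qed (auto simp: m_def)
  then have "Q ^ 2 = (\<Prod>j\<in>{1..d}. Gamma (of_nat j / of_nat m :: complex) * Gamma (1 - of_nat j / of_nat m))"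
    unfolding Q_def m_def power2_eq_square prod.distrib by simp
  also have "\<dots> = (\<Prod>j\<in>{1..d}. of_real pi / of_real (sin (pi * real j / real m)))"
  proof (intro prod.cong refl)
    fix j assume j: "j \<in> {1..d}"
    have "sin (of_real pi * (of_nat j / of_nat m)) = (of_real (sin (pi * real j / real m)) :: complex)"
      by (simp flip: sin_of_real)
    then show "Gamma (of_nat j / of_nat m :: complex) * Gamma (1 - of_nat j / of_nat m) = of_real pi / of_real (sin (pi * real j / real m))"
      by (simp add: Gamma_reflection_complex)
  qed
  also have "\<dots> = of_real pi ^ d / of_real (\<Prod>j\<in>{1..d}. sin (pi * real j / real m))"
    by (simp add: prod_dividef)
  also have "(\<Prod>j\<in>{1..d}. sin (pi * real j / real m)) = real m / 2 ^ d"
    using sin_prod[of d] unfolding m_def by (simp add: field_simps)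
  finally show ?thesis unfolding m_def by (simp add: field_simps)
qed


lemma gauss_full:
  fixes d :: nat
  shows "\<exists>C. C ^ 2 = (2 * complex_of_real pi) ^ d * of_nat (Suc d) \<and>
     (\<forall>z::complex. of_nat (Suc d) * z \<notin> \<int>\<^sub>\<le>\<^sub>0 \<longrightarrow>
     (\<Prod>k<Suc d. Gamma (z + of_nat k / of_nat (Suc d))) = C * exp (- (of_nat (Suc d) * z) * of_real (ln (real (Suc d)))) * Gamma (of_nat (Suc d) * z))"
proof -
  define m where "m = Suc d"
  have m: "m > 0" by (simp add: m_def)
  have m0: "(of_nat m :: complex) \<noteq> 0" unfolding m_def by (rule of_nat_neq_0)
  obtain C where C: "\<And>z::complex. of_nat m * z \<notin> \<int>\<^sub>\<le>\<^sub>0 \<Longrightarrow>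
     (\<Prod>k<m. Gamma (z + of_nat k / of_nat m)) = C * exp (- (of_nat m * z) * of_real (ln (real m))) * Gamma (of_nat m * z)"
    using gauss_mult[OF m] by blast
  define Q where "Q = (\<Prod>j\<in>{1..d}. Gamma (of_nat j / of_nat (Suc d) :: complex))"
  have "(\<Prod>k<m. Gamma (1 / of_nat m + of_nat k / of_nat m)) = C * exp (- (of_nat m * (1 / of_nat m)) * of_real (ln (real m))) * Gamma (of_nat m * (1 / of_nat m))"
    by (rule C) (use m0 in simp)
  also have "exp (- (of_nat m * (1 / of_nat m)) * of_real (ln (real m))) = (1 / of_nat m :: complex)"
    using m0 m by (simp add: exp_minus exp_of_real divide_inverse)
  also have "of_nat m * (1 / of_nat m) = (1::complex)" using m0 by simp
  also have "(\<Prod>k<m. Gamma (1 / of_nat m + of_nat k / of_nat m)) = (\<Prod>k<Suc d. Gamma (of_nat (Suc k) / of_nat (Suc d) :: complex))"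
    unfolding m_def by (intro prod.cong refl) (simp add: add_divide_distrib)
  also have "\<dots> = (\<Prod>k<d. Gamma (of_nat (Suc k) / of_nat (Suc d) :: complex)) * Gamma (of_nat (Suc d) / of_nat (Suc d))"
    by (rule prod.lessThan_Suc)
  also have "(\<Prod>k<d. Gamma (of_nat (Suc k) / of_nat (Suc d) :: complex)) = Q"
    unfolding Q_def using prod.atLeast1_atMost_eq[of "\<lambda>j. Gamma (of_nat j / of_nat (Suc d) :: complex)" d] by simp
  also have "Gamma (of_nat (Suc d) / of_nat (Suc d) :: complex) = 1"
    using of_nat_neq_0[of d, where 'a=complex] by simp
  finally have "Q = C / of_nat m" by simp
  then have "C = of_nat m * Q" using m0 by (simp add: field_simps)
  then have "C ^ 2 = of_nat m ^ 2 * Q ^ 2" by (simp add: power_mult_distrib)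
  also have "of_nat m ^ 2 * Q ^ 2 = of_nat m * (of_nat m * Q ^ 2)" by (simp add: power2_eq_square)
  also have "of_nat m * Q ^ 2 = of_real pi ^ d * 2 ^ d"
  proof -
    have "Q ^ 2 = of_real pi ^ d * 2 ^ d / of_nat m" unfolding Q_def m_def by (rule Gamma_frac_prod_sq)
    then show ?thesis using m0 by simp
  qed
  finally have "C ^ 2 = (2 * complex_of_real pi) ^ d * of_nat (Suc d)"
    unfolding m_def by (simp add: power_mult_distrib mult_ac)
  with C show ?thesis unfolding m_def by blast
qed

lemma shifted_prod:
  fixes t :: complex
  assumes m: "m > 0" and t: "t \<notin> \<int>\<^sub>\<le>\<^sub>0"
  shows "(\<Prod>k<m. Gamma (1 - complex_of_real (real k / real m) + t)) = t * (\<Prod>k<m. Gamma (t + of_nat k / of_nat m))"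
proof -
  define f where "f j = Gamma (t + of_nat j / of_nat m)" for j
  have m0: "(of_nat m :: complex) \<noteq> 0" using m by simp
  have "(\<Prod>k<m. Gamma (1 - complex_of_real (real k / real m) + t)) = (\<Prod>j\<in>{1..m}. f j)"
  proof (rule prod.reindex_bij_witness[of _ "\<lambda>j. m - j" "\<lambda>j. m - j"])
    fix k assume k: "k \<in> {..<m}"
    show "m - (m - k) = k" "m - k \<in> {1..m}" using k by auto
    have e: "(of_nat (m - k) :: complex) = of_nat m - of_nat k" using k by (simp add: of_nat_diff)
    have "1 - complex_of_real (real k / real m) + t = t + of_nat (m - k) / of_nat m"
      unfolding of_real_divide of_real_of_nat_eq e using m0 by (simp add: field_simps)
    then show "f (m - k) = Gamma (1 - complex_of_real (real k / real m) + t)" unfolding f_def by (simp only:)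
  next
    fix j assume j: "j \<in> {1..m}"
    show "m - (m - j) = j" "m - j \<in> {..<m}" using j by auto
  qed
  also have "\<dots> = (\<Prod>k<m. f (Suc k))" by (simp add: prod.atLeast1_atMost_eq)
  finally have A: "(\<Prod>k<m. Gamma (1 - complex_of_real (real k / real m) + t)) = (\<Prod>k<m. f (Suc k))" .
  have "f 0 * (\<Prod>k<m. f (Suc k)) = (\<Prod>k<m. f k) * f m"
    using prod.lessThan_Suc_shift[of f m] prod.lessThan_Suc[of f m] by simp
  also have "f m = t * f 0" unfolding f_def using m0 t by (simp add: Gamma_plus1)
  finally have "f 0 * (\<Prod>k<m. f (Suc k)) = f 0 * (t * (\<Prod>k<m. f k))" by (simp add: mult_ac)
  moreover have "f 0 \<noteq> 0" unfolding f_def using t by (simp add: Gamma_eq_zero_iff)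
  ultimately have "(\<Prod>k<m. f (Suc k)) = t * (\<Prod>k<m. f k)" by simp
  with A show ?thesis by (simp add: f_def)
qed


lemma prod_list_map_concat:
  "prod_list (map g (concat (map F xs))) = prod_list (map (\<lambda>x. prod_list (map g (F x))) xs)"
  by (induction xs) auto

lemma block_eq:
  fixes t1 t2 :: complex
  assumes m: "m > 0" and v1: "of_nat m * t1 \<notin> \<int>\<^sub>\<le>\<^sub>0" and v2: "of_nat m * t2 \<notin> \<int>\<^sub>\<le>\<^sub>0"
  shows "iritani_gamma (concat (map (\<lambda>k. [(real k / real m, t1), (real k / real m, t2)]) [0..<m]))
    = t1 * t2 * (2 * complex_of_real pi) ^ (m - 1) * of_nat m
      * (of_nat m powr (- of_nat m * t1) * of_nat m powr (- of_nat m * t2))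
      * (Gamma (of_nat m * t1) * Gamma (of_nat m * t2))"
proof -
  obtain d where d: "m = Suc d" using m by (cases m) auto
  obtain C where C2: "C ^ 2 = (2 * complex_of_real pi) ^ d * of_nat (Suc d)"
    and C: "\<And>z::complex. of_nat (Suc d) * z \<notin> \<int>\<^sub>\<le>\<^sub>0 \<Longrightarrow>
     (\<Prod>k<Suc d. Gamma (z + of_nat k / of_nat (Suc d))) = C * exp (- (of_nat (Suc d) * z) * of_real (ln (real (Suc d)))) * Gamma (of_nat (Suc d) * z)"
    using gauss_full[of d] by blast
  have pw: "exp (- (of_nat m * z) * of_real (ln (real m))) = of_nat m powr (- of_nat m * z)" for z :: complex
    using m by (simp add: powr_def)
  have G: "(\<Prod>k<m. Gamma (1 - complex_of_real (real k / real m) + t)) = t * C * of_nat m powr (- of_nat m * t) * Gamma (of_nat m * t)"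
    if v: "of_nat m * t \<notin> \<int>\<^sub>\<le>\<^sub>0" for t :: complex
  proof -
    have t: "t \<notin> \<int>\<^sub>\<le>\<^sub>0" using shift_valid[OF m v, of 0] by simp
    show ?thesis unfolding shifted_prod[OF m t] using C[of t] v unfolding d[symmetric] pw by (simp add: mult_ac)
  qed
  have "iritani_gamma (concat (map (\<lambda>k. [(real k / real m, t1), (real k / real m, t2)]) [0..<m]))
     = (\<Prod>k<m. Gamma (1 - complex_of_real (real k / real m) + t1) * Gamma (1 - complex_of_real (real k / real m) + t2))"
    unfolding iritani_gamma_def prod_list_map_concat
    by (subst prod.distinct_set_conv_list[symmetric]) (auto simp: atLeast0LessThan)
  also have "\<dots> = (\<Prod>k<m. Gamma (1 - complex_of_real (real k / real m) + t1)) * (\<Prod>k<m. Gamma (1 - complex_of_real (real k / real m) + t2))"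
    by (rule prod.distrib)
  also have "\<dots> = t1 * t2 * C ^ 2 * (of_nat m powr (- of_nat m * t1) * of_nat m powr (- of_nat m * t2))
      * (Gamma (of_nat m * t1) * Gamma (of_nat m * t2))"
    unfolding G[OF v1] G[OF v2] by (simp add: power2_eq_square mult_ac)
  also have "C ^ 2 = (2 * complex_of_real pi) ^ (m - 1) * of_nat m" using C2 d by simp
  finally show ?thesis by (simp add: mult_ac)
qed

lemma length_le_sum_list: "\<forall>m\<in>set \<mu>. 0 < m \<Longrightarrow> length \<mu> \<le> sum_list (\<mu> :: nat list)"
  by (induction \<mu>) auto

lemma main_ind:
  fixes \<mu> :: "nat list" and t1 t2 :: complex
  assumes "\<forall>m\<in>set \<mu>. 0 < m"
    and "\<forall>m\<in>set \<mu>. of_nat m * t1 \<notin> \<int>\<^sub>\<le>\<^sub>0 \<and> of_nat m * t2 \<notin> \<int>\<^sub>\<le>\<^sub>0"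
  shows "Gamma_Sym_restr \<mu> t1 t2 =
    (t1 * t2) ^ length \<mu> * (2 * complex_of_real pi) ^ (sum_list \<mu> - length \<mu>)
    * (\<Prod>m\<leftarrow>\<mu>. of_nat m)
    * (\<Prod>m\<leftarrow>\<mu>. of_nat m powr (- of_nat m * t1) * of_nat m powr (- of_nat m * t2))
    * (\<Prod>m\<leftarrow>\<mu>. Gamma (of_nat m * t1) * Gamma (of_nat m * t2))"
  using assms
proof (induction \<mu>)
  case Nil
  then show ?case by (simp add: Gamma_Sym_restr_def tangent_Sym_at_def iritani_gamma_def)
next
  case (Cons m \<mu>)
  have m: "m > 0" using Cons.prems by simp
  have split: "Gamma_Sym_restr (m # \<mu>) t1 t2 =
     iritani_gamma (concat (map (\<lambda>k. [(real k / real m, t1), (real k / real m, t2)]) [0..<m])) * Gamma_Sym_restr \<mu> t1 t2"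
    by (simp add: Gamma_Sym_restr_def tangent_Sym_at_def iritani_gamma_def)
  have le: "length \<mu> \<le> sum_list \<mu>" using Cons.prems(1) by (intro length_le_sum_list) simp
  have ex: "sum_list (m # \<mu>) - length (m # \<mu>) = (m - 1) + (sum_list \<mu> - length \<mu>)" using m le by simp
  have v1: "of_nat m * t1 \<notin> \<int>\<^sub>\<le>\<^sub>0" and v2: "of_nat m * t2 \<notin> \<int>\<^sub>\<le>\<^sub>0" using Cons.prems by auto
  have IH: "Gamma_Sym_restr \<mu> t1 t2 =
    (t1 * t2) ^ length \<mu> * (2 * complex_of_real pi) ^ (sum_list \<mu> - length \<mu>)
    * (\<Prod>m\<leftarrow>\<mu>. of_nat m)
    * (\<Prod>m\<leftarrow>\<mu>. of_nat m powr (- of_nat m * t1) * of_nat m powr (- of_nat m * t2))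
    * (\<Prod>m\<leftarrow>\<mu>. Gamma (of_nat m * t1) * Gamma (of_nat m * t2))"
    using Cons.prems by (intro Cons.IH) auto
  show ?case
    unfolding split block_eq[OF m v1 v2] IH ex by (simp add: power_add mult_ac)
qed

theorem lemma2:
  fixes n :: nat and \<mu> :: "nat list" and t1 t2 :: complex
  assumes "\<forall>m\<in>set \<mu>. 0 < m"
    and "sum_list \<mu> = n"
    and "\<forall>m\<in>set \<mu>. of_nat m * t1 \<notin> \<int>\<^sub>\<le>\<^sub>0 \<and> of_nat m * t2 \<notin> \<int>\<^sub>\<le>\<^sub>0"
  shows "Gamma_Sym_restr \<mu> t1 t2 =
    (t1 * t2) ^ length \<mu> * (2 * complex_of_real pi) ^ (n - length \<mu>)
    * (\<Prod>m\<leftarrow>\<mu>. of_nat m)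
    * (\<Prod>m\<leftarrow>\<mu>. of_nat m powr (- of_nat m * t1) * of_nat m powr (- of_nat m * t2))
    * (\<Prod>m\<leftarrow>\<mu>. Gamma (of_nat m * t1) * Gamma (of_nat m * t2))"
  using main_ind[OF assms(1) assms(3)] assms(2) by simp

end
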